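(* Let $\mathcal{L}$ be a set of lines of $\mathsf{PG}(7,q^3)$ satisfying (Pt): every point of $\mathsf{PG}(7,q^3)$ is incident with $0$ or $q+1$ elements of $\mathcal{L}$; (Pl): every plane contains $0$, $1$ or $q+1$ elements of $\mathcal{L}$; and (Sd): every solid contains $0,1,q+1$ or $2q+1$ elements of $\mathcal{L}$. Then no three lines of $\mathcal{L}$ form a triangle and no four lines of $\mathcal{L}$ form a quadrangle.
   Context: A triangle (resp. quadrangle) is a set of $3$ (resp. $4$) lines $L_1,\dots,L_k$ such that $L_i$ meets $L_{i+1}$ (indices mod $k$) and the $k$ intersection points are pairwise distinct. *)

theory Defs
  imports "HOL-Analysis.Analysis" "HOL-Library.Numeral_Type"
begin

text \<open>The projective space PG(7,K) is modelled by the vector space K^8; a projective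
 subspace of projective dimension d is a linear subspace of K^8 of vector dimension d+1.\<close>

definition psub :: "nat \<Rightarrow> ('k::field ^ 8) set \<Rightarrow> bool" where
  "psub d U \<longleftrightarrow> vec.subspace U \<and> vec.dim U = d + 1"

abbreviation "is_point U \<equiv> psub 0 U"
abbreviation "is_line U \<equiv> psub 1 U"
abbreviation "is_plane U \<equiv> psub 2 U"
abbreviation "is_solid U \<equiv> psub 3 U"

definition is_polygon :: "nat \<Rightarrow> (nat \<Rightarrow> ('k::field ^ 8) set) \<Rightarrow> bool" where
  "is_polygon k L \<longleftrightarrow>
     (\<forall>i<k. is_line (L i)) \<and> inj_on L {..<k} \<and>
     (\<forall>i<k. is_point (L i \<inter> L (Suc i mod k))) \<and>
     inj_on (\<lambda>i. L i \<inter> L (Suc i mod k)) {..<k}"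

end

theory Submission
  imports Defs
begin

definition msum :: "('k::field ^ 8) set \<Rightarrow> ('k ^ 8) set \<Rightarrow> ('k ^ 8) set" where
  "msum A B = {x + y |x y. x \<in> A \<and> y \<in> B}"

lemma msum_sub: "vec.subspace A \<Longrightarrow> vec.subspace B \<Longrightarrow> vec.subspace (msum A B)"
  unfolding msum_def by (rule vec.subspace_sums)

lemma msum_dim: "vec.subspace A \<Longrightarrow> vec.subspace B \<Longrightarrow>
   vec.dim (msum A B) + vec.dim (A \<inter> B) = vec.dim A + vec.dim B"
  unfolding msum_def by (rule vec.dim_sums_Int)

lemma msum_ge1: "vec.subspace B \<Longrightarrow> A \<subseteq> msum A B"
  unfolding msum_def using vec.subspace_0 by force

lemma msum_ge2: "vec.subspace A \<Longrightarrow> B \<subseteq> msum A B"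
  unfolding msum_def using vec.subspace_0 by force

lemma msum_le: "vec.subspace W \<Longrightarrow> A \<subseteq> W \<Longrightarrow> B \<subseteq> W \<Longrightarrow> msum A B \<subseteq> W"
  unfolding msum_def using vec.subspace_add by blast

lemma sub_eq: "vec.subspace U \<Longrightarrow> vec.subspace V \<Longrightarrow> U \<subseteq> V \<Longrightarrow> vec.dim V \<le> vec.dim U \<Longrightarrow> U = V"
  by (rule vec.subspace_dim_equal)

lemma int_sub: "vec.subspace A \<Longrightarrow> vec.subspace B \<Longrightarrow> vec.subspace (A \<inter> B)"
  by (rule vec.subspace_inter)

lemma psub_eq: "psub d U \<Longrightarrow> psub d V \<Longrightarrow> U \<subseteq> V \<Longrightarrow> U = V"
proof -
  assume a: "psub d U" "psub d V" "U \<subseteq> V"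
  then have "vec.subspace U" "vec.subspace V" "vec.dim V \<le> vec.dim U" unfolding psub_def by auto
  then show "U = V" using sub_eq a(3) by blast
qed

lemma psubD: "psub d U \<Longrightarrow> vec.subspace U"
  unfolding psub_def by auto

lemma psubI: "vec.subspace U \<Longrightarrow> vec.dim U = d + 1 \<Longrightarrow> psub d U"
  unfolding psub_def by auto

lemma lines_meet_point:
  assumes "is_line A" "is_line B" "A \<noteq> B" "is_point p" "p \<subseteq> A" "p \<subseteq> B"
  shows "A \<inter> B = p"
proof -
  have sA: "vec.subspace A" and sB: "vec.subspace B" and sp: "vec.subspace p"
    and dA: "vec.dim A = 2" and dB: "vec.dim B = 2" and dp: "vec.dim p = 1"
    using assms unfolding psub_def by auto
  have sI: "vec.subspace (A \<inter> B)" using int_sub sA sB by blast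
  have d1: "vec.dim (A \<inter> B) \<le> 2" using vec.dim_subset[of "A \<inter> B" A] dA by auto
  have d2: "vec.dim (A \<inter> B) \<ge> 1" using vec.dim_subset[of p "A \<inter> B"] assms dp by auto
  have "vec.dim (A \<inter> B) \<noteq> 2"
  proof
    assume "vec.dim (A \<inter> B) = 2"
    then have "A \<inter> B = A" "A \<inter> B = B"
      using sub_eq[OF sI sA] sub_eq[OF sI sB] dA dB by auto
    then show False using assms(3) by auto
  qed
  then have "vec.dim (A \<inter> B) = 1" using d1 d2 by linarith
  then show ?thesis using sub_eq[OF sp sI] assms dp by auto
qed

lemma two_points_line:
  assumes "is_point a" "is_point b" "a \<noteq> b" "is_line l" "a \<subseteq> l" "b \<subseteq> l"
  shows "l = msum a b"
proof -
  have sa: "vec.subspace a" and sb: "vec.subspace b" and sl: "vec.subspace l"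
    and da: "vec.dim a = 1" and db: "vec.dim b = 1" and dl: "vec.dim l = 2"
    using assms unfolding psub_def by auto
  have sI: "vec.subspace (a \<inter> b)" using int_sub sa sb by blast
  have d1: "vec.dim (a \<inter> b) \<le> 1" using vec.dim_subset[of "a \<inter> b" a] da by auto
  have "vec.dim (a \<inter> b) \<noteq> 1"
  proof
    assume "vec.dim (a \<inter> b) = 1"
    then have "a \<inter> b = a" "a \<inter> b = b"
      using sub_eq[OF sI sa] sub_eq[OF sI sb] da db by auto
    then show False using assms(3) by auto
  qed
  then have "vec.dim (a \<inter> b) = 0" using d1 by linarith
  then have "vec.dim (msum a b) = 2" using msum_dim[OF sa sb] da db by linarith
  moreover have "msum a b \<subseteq> l" using msum_le sl assms by blast
  ultimately show ?thesis using sub_eq[OF msum_sub[OF sa sb] sl] dl by simp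
qed

lemma meet_plane:
  assumes "is_line A" "is_line B" "is_point (A \<inter> B)"
  shows "is_plane (msum A B)"
proof -
  have sA: "vec.subspace A" and sB: "vec.subspace B"
    and dA: "vec.dim A = 2" and dB: "vec.dim B = 2" and dp: "vec.dim (A \<inter> B) = 1"
    using assms unfolding psub_def by auto
  show ?thesis using msum_dim[OF sA sB] dA dB dp msum_sub[OF sA sB] by (intro psubI) auto
qed

lemma two_planes_line:
  assumes "is_plane P" "is_plane Q" "P \<noteq> Q" "is_line l" "is_line l'" "l \<noteq> l'"
    "l \<subseteq> P" "l \<subseteq> Q" "l' \<subseteq> P" "l' \<subseteq> Q"
  shows False
proof -
  have sP: "vec.subspace P" and sQ: "vec.subspace Q" and sl: "vec.subspace l" and sl': "vec.subspace l'"
    and dP: "vec.dim P = 3" and dQ: "vec.dim Q = 3" and dl: "vec.dim l = 2" and dl': "vec.dim l' = 2"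
    using assms unfolding psub_def by auto
  have sI: "vec.subspace (l \<inter> l')" using int_sub sl sl' by blast
  have d1: "vec.dim (l \<inter> l') \<le> 2" using vec.dim_subset[of "l \<inter> l'" l] dl by auto
  have "vec.dim (l \<inter> l') \<noteq> 2"
  proof
    assume "vec.dim (l \<inter> l') = 2"
    then have "l \<inter> l' = l" "l \<inter> l' = l'"
      using sub_eq[OF sI sl] sub_eq[OF sI sl'] dl dl' by auto
    then show False using assms(6) by auto
  qed
  then have "vec.dim (msum l l') \<ge> 3" using msum_dim[OF sl sl'] d1 dl dl' by simp
  moreover have "msum l l' \<subseteq> P" "msum l l' \<subseteq> Q" using msum_le sP sQ assms by blast+
  ultimately have "msum l l' = P" "msum l l' = Q"
    using sub_eq[OF msum_sub[OF sl sl'] sP] sub_eq[OF msum_sub[OF sl sl'] sQ] dP dQ by auto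
  then show False using assms(3) by simp
qed

lemma count3:
  fixes A B C T :: "'a set"
  assumes "finite T" "A \<subseteq> T" "B \<subseteq> T" "C \<subseteq> T"
    "card A = q + 1" "card B = q + 1" "card C = q + 1"
    "card (A \<inter> B) \<le> 1" "card (A \<inter> C) \<le> 1" "card (B \<inter> C) \<le> 1"
    "card T \<le> 2 * q + 1" "q \<ge> 2"
  shows False
proof -
  have fin: "finite A" "finite B" "finite C" using assms finite_subset by auto
  have "card (A \<union> B) = card A + card B - card (A \<inter> B)"
    using card_Un_Int[OF fin(1,2)] by simp
  moreover have "card (A \<union> B \<union> C) = card (A \<union> B) + card C - card ((A \<union> B) \<inter> C)"
    using card_Un_Int[of "A \<union> B" C] fin by simp
  moreover have "card ((A \<union> B) \<inter> C) \<le> card (A \<inter> C) + card (B \<inter> C)"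
    by (metis Int_Un_distrib2 card_Un_le)
  moreover have "card (A \<union> B \<union> C) \<le> card T"
    using assms by (intro card_mono) auto
  moreover have "card (A \<inter> B) \<le> card A" using fin by (intro card_mono) auto
  moreover have "card ((A \<union> B) \<inter> C) \<le> card C" using fin by (intro card_mono) auto
  ultimately show False using assms by linarith
qed

lemma solid_ext:
  assumes "is_plane P" "is_line m" "\<not> m \<subseteq> P" "is_point p" "p \<subseteq> P" "p \<subseteq> m"
  shows "is_solid (msum P m)"
proof -
  have sP: "vec.subspace P" and sm: "vec.subspace m" and dP: "vec.dim P = 3" and dm: "vec.dim m = 2"
    and dp: "vec.dim p = 1"
    using assms unfolding psub_def by auto
  have sI: "vec.subspace (P \<inter> m)" using int_sub sP sm by blast
  have d1: "vec.dim (P \<inter> m) \<le> 2" using vec.dim_subset[of "P \<inter> m" m] dm by auto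
  have d2: "vec.dim (P \<inter> m) \<ge> 1" using vec.dim_subset[of p "P \<inter> m"] assms dp by auto
  have "vec.dim (P \<inter> m) \<noteq> 2"
  proof
    assume "vec.dim (P \<inter> m) = 2"
    then have "P \<inter> m = m" using sub_eq[OF sI sm] dm by auto
    then show False using assms(3) by auto
  qed
  then have "vec.dim (P \<inter> m) = 1" using d1 d2 by linarith
  then show ?thesis using msum_dim[OF sP sm] dP dm msum_sub[OF sP sm] by (intro psubI) auto
qed

locale conf =
  fixes q :: nat and \<L> :: "('k::{field,finite} ^ 8) set set"
  assumes card_field: "CARD('k) = q ^ 3"
    and lines: "\<forall>l\<in>\<L>. is_line l"
    and Pt: "\<forall>p. is_point p \<longrightarrow> card {l\<in>\<L>. p \<subseteq> l} \<in> {0, q + 1}"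
    and Pl: "\<forall>\<pi>. is_plane \<pi> \<longrightarrow> card {l\<in>\<L>. l \<subseteq> \<pi>} \<in> {0, 1, q + 1}"
    and Sd: "\<forall>S. is_solid S \<longrightarrow> card {l\<in>\<L>. l \<subseteq> S} \<in> {0, 1, q + 1, 2 * q + 1}"
begin

lemma finL: "finite (A :: ('k ^ 8) set set)"
  by (rule finite_subset[OF subset_UNIV]) simp

lemma q2: "q \<ge> 2"
proof -
  have "card {0::'k, 1} \<le> CARD('k)" by (rule card_mono) auto
  then have "CARD('k) \<ge> 2" by simp
  then have "q ^ 3 \<ge> 2" using card_field by simp
  have "q \<noteq> 0" using \<open>q ^ 3 \<ge> 2\<close> by (cases q) auto
  moreover have "q \<noteq> 1" using \<open>q ^ 3 \<ge> 2\<close> by (cases "q = 1") auto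
  ultimately show ?thesis by linarith
qed

lemma pen_card: "is_point p \<Longrightarrow> l \<in> \<L> \<Longrightarrow> p \<subseteq> l \<Longrightarrow> card {l\<in>\<L>. p \<subseteq> l} = q + 1"
proof -
  assume a: "is_point p" "l \<in> \<L>" "p \<subseteq> l"
  have "card {l\<in>\<L>. p \<subseteq> l} \<noteq> 0" using a finL[of "{l\<in>\<L>. p \<subseteq> l}"] by auto
  then show ?thesis using Pt a by auto
qed

lemma plane_card: "is_plane P \<Longrightarrow> l \<in> \<L> \<Longrightarrow> l' \<in> \<L> \<Longrightarrow> l \<noteq> l' \<Longrightarrow> l \<subseteq> P \<Longrightarrow> l' \<subseteq> P
   \<Longrightarrow> card {l\<in>\<L>. l \<subseteq> P} = q + 1"
proof -
  assume a: "is_plane P" "l \<in> \<L>" "l' \<in> \<L>" "l \<noteq> l'" "l \<subseteq> P" "l' \<subseteq> P"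
  have "card {l, l'} \<le> card {l\<in>\<L>. l \<subseteq> P}" using a finL by (intro card_mono) auto
  then have "card {l\<in>\<L>. l \<subseteq> P} \<ge> 2" using a by simp
  then show ?thesis using Pl a by auto
qed

lemma solid_le: "is_solid S \<Longrightarrow> card {l\<in>\<L>. l \<subseteq> S} \<le> 2 * q + 1"
proof -
  assume "is_solid S"
  then have "card {l\<in>\<L>. l \<subseteq> S} \<in> {0, 1, q + 1, 2 * q + 1}" using Sd by blast
  moreover have "\<And>n::nat. n \<in> {0, 1, q + 1, 2 * q + 1} \<Longrightarrow> n \<le> 2 * q + 1" by auto
  ultimately show ?thesis by blast
qed

lemma pen_inter: "is_point a \<Longrightarrow> is_point b \<Longrightarrow> a \<noteq> b \<Longrightarrow>
   card ({l\<in>\<L>. a \<subseteq> l} \<inter> {l\<in>\<L>. b \<subseteq> l}) \<le> 1"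
proof -
  assume a: "is_point a" "is_point b" "a \<noteq> b"
  have "\<forall>x\<in>{l\<in>\<L>. a \<subseteq> l} \<inter> {l\<in>\<L>. b \<subseteq> l}. \<forall>y\<in>{l\<in>\<L>. a \<subseteq> l} \<inter> {l\<in>\<L>. b \<subseteq> l}. x = y"
  proof (intro ballI)
    fix x y assume "x \<in> {l\<in>\<L>. a \<subseteq> l} \<inter> {l\<in>\<L>. b \<subseteq> l}" "y \<in> {l\<in>\<L>. a \<subseteq> l} \<inter> {l\<in>\<L>. b \<subseteq> l}"
    then have "x = msum a b" "y = msum a b" using two_points_line[OF a] lines by auto
    then show "x = y" by simp
  qed
  then show ?thesis using card_le_Suc0_iff_eq[OF finL] by simp
qed

lemma plane_inter: "is_plane P \<Longrightarrow> is_plane Q \<Longrightarrow> P \<noteq> Q \<Longrightarrow>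
   card ({l\<in>\<L>. l \<subseteq> P} \<inter> {l\<in>\<L>. l \<subseteq> Q}) \<le> 1"
proof -
  assume a: "is_plane P" "is_plane Q" "P \<noteq> Q"
  have "\<forall>x\<in>{l\<in>\<L>. l \<subseteq> P} \<inter> {l\<in>\<L>. l \<subseteq> Q}. \<forall>y\<in>{l\<in>\<L>. l \<subseteq> P} \<inter> {l\<in>\<L>. l \<subseteq> Q}. x = y"
    using two_planes_line[OF a] lines by blast
  then show ?thesis using card_le_Suc0_iff_eq[OF finL] by simp
qed

lemma lemmaB:
  assumes p: "is_point p" and L0: "L0 \<in> \<L>" and L1: "L1 \<in> \<L>" and ne: "L0 \<noteq> L1"
    and pL0: "p \<subseteq> L0" and pL1: "p \<subseteq> L1" and m: "m \<in> \<L>" and pm: "p \<subseteq> m"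
  shows "m \<subseteq> msum L0 L1"
proof (rule ccontr)
  assume nm: "\<not> m \<subseteq> msum L0 L1"
  have l0: "is_line L0" and l1: "is_line L1" and lm: "is_line m" using L0 L1 m lines by auto
  have s0: "vec.subspace L0" and s1: "vec.subspace L1" and sm: "vec.subspace m"
    using psubD[OF l0] psubD[OF l1] psubD[OF lm] by auto
  have I01: "L0 \<inter> L1 = p" using lines_meet_point[OF l0 l1 ne p pL0 pL1] .
  have sub0: "L0 \<subseteq> msum L0 L1" "L1 \<subseteq> msum L0 L1" using msum_ge1[OF s1] msum_ge2[OF s0] by auto
  have mne0: "m \<noteq> L0" and mne1: "m \<noteq> L1" using nm sub0 by auto
  have I0: "m \<inter> L0 = p" using lines_meet_point[OF lm l0 mne0 p pm pL0] .
  have I1: "m \<inter> L1 = p" using lines_meet_point[OF lm l1 mne1 p pm pL1] .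
  define P1 where "P1 = msum L0 L1"
  define P2 where "P2 = msum m L0"
  define P3 where "P3 = msum m L1"
  have pl1: "is_plane P1" unfolding P1_def using meet_plane[OF l0 l1] I01 p by simp
  have pl2: "is_plane P2" unfolding P2_def using meet_plane[OF lm l0] I0 p by simp
  have pl3: "is_plane P3" unfolding P3_def using meet_plane[OF lm l1] I1 p by simp
  define S where "S = msum P1 m"
  have pP1: "p \<subseteq> P1" using pL0 sub0 P1_def by auto
  have sol: "is_solid S" unfolding S_def using solid_ext[OF pl1 lm _ p pP1 pm] nm P1_def by simp
  have sP1: "vec.subspace P1" using psubD[OF pl1] .
  have sS: "vec.subspace S" using psubD[OF sol] .
  have P1S: "P1 \<subseteq> S" and mS: "m \<subseteq> S" unfolding S_def using msum_ge1[OF sm] msum_ge2[OF sP1] by auto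
  have L0S: "L0 \<subseteq> S" and L1S: "L1 \<subseteq> S" using sub0 P1S P1_def by auto
  have P2S: "P2 \<subseteq> S" unfolding P2_def using msum_le[OF sS mS L0S] .
  have P3S: "P3 \<subseteq> S" unfolding P3_def using msum_le[OF sS mS L1S] .
  have mP2: "m \<subseteq> P2" "L0 \<subseteq> P2" unfolding P2_def using msum_ge1[OF s0] msum_ge2[OF sm] by auto
  have mP3: "m \<subseteq> P3" "L1 \<subseteq> P3" unfolding P3_def using msum_ge1[OF s1] msum_ge2[OF sm] by auto
  have ne12: "P1 \<noteq> P2" using mP2 nm P1_def by auto
  have ne13: "P1 \<noteq> P3" using mP3 nm P1_def by auto
  have ne23: "P2 \<noteq> P3"
  proof
    assume "P2 = P3"
    then have "L1 \<subseteq> P2" using mP3 by simp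
    moreover have "vec.subspace P2" using pl2 by (rule psubD)
    ultimately have "P1 \<subseteq> P2" unfolding P1_def using mP2(2) by (intro msum_le)
    then have "P1 = P2" using psub_eq[OF pl1 pl2] by simp
    then show False using ne12 by simp
  qed
  have c1: "card {l\<in>\<L>. l \<subseteq> P1} = q + 1" using plane_card[OF pl1 L0 L1 ne] sub0 P1_def by auto
  have c2: "card {l\<in>\<L>. l \<subseteq> P2} = q + 1" using plane_card[OF pl2 m L0 mne0] mP2 by auto
  have c3: "card {l\<in>\<L>. l \<subseteq> P3} = q + 1" using plane_card[OF pl3 m L1 mne1] mP3 by auto
  show False
  proof (rule count3[OF finL _ _ _ c1 c2 c3 plane_inter[OF pl1 pl2 ne12] plane_inter[OF pl1 pl3 ne13]
      plane_inter[OF pl2 pl3 ne23] solid_le[OF sol] q2])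
    show "{l\<in>\<L>. l \<subseteq> P1} \<subseteq> {l\<in>\<L>. l \<subseteq> S}" using P1S by blast
    show "{l\<in>\<L>. l \<subseteq> P2} \<subseteq> {l\<in>\<L>. l \<subseteq> S}" using P2S by blast
    show "{l\<in>\<L>. l \<subseteq> P3} \<subseteq> {l\<in>\<L>. l \<subseteq> S}" using P3S by blast
  qed
qed

lemma lemmaC:
  assumes L0: "L0 \<in> \<L>" and L1: "L1 \<in> \<L>" and ne: "L0 \<noteq> L1" and p: "is_point (L0 \<inter> L1)"
    and L2: "L2 \<in> \<L>" and L2P: "L2 \<subseteq> msum L0 L1" and np: "\<not> (L0 \<inter> L1) \<subseteq> L2"
  shows False
proof -
  let ?p = "L0 \<inter> L1"
  have pl: "is_plane (msum L0 L1)" using meet_plane[OF _ _ p] L0 L1 lines by blast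
  have "{l\<in>\<L>. ?p \<subseteq> l} \<subseteq> {l\<in>\<L>. l \<subseteq> msum L0 L1}"
  proof
    fix l assume "l \<in> {l\<in>\<L>. ?p \<subseteq> l}"
    then have a: "l \<in> \<L>" "?p \<subseteq> l" by auto
    have "l \<subseteq> msum L0 L1" by (rule lemmaB[OF p L0 L1 ne Int_lower1 Int_lower2 a])
    then show "l \<in> {l\<in>\<L>. l \<subseteq> msum L0 L1}" using a by simp
  qed
  then have "insert L2 {l\<in>\<L>. ?p \<subseteq> l} \<subseteq> {l\<in>\<L>. l \<subseteq> msum L0 L1}" using L2 L2P by auto
  then have "card (insert L2 {l\<in>\<L>. ?p \<subseteq> l}) \<le> card {l\<in>\<L>. l \<subseteq> msum L0 L1}"
    by (rule card_mono[OF finL])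
  moreover have "card (insert L2 {l\<in>\<L>. ?p \<subseteq> l}) = q + 2"
  proof -
    have "L2 \<notin> {l\<in>\<L>. ?p \<subseteq> l}" using np by blast
    then have "card (insert L2 {l\<in>\<L>. ?p \<subseteq> l}) = Suc (card {l\<in>\<L>. ?p \<subseteq> l})"
      using finL by (rule card_insert_disjoint[rotated])
    then show ?thesis using pen_card[OF p L0 Int_lower1] by simp
  qed
  moreover have c3: "card {l\<in>\<L>. l \<subseteq> msum L0 L1} \<in> {0, 1, q + 1}" using Pl pl by blast
  moreover have le: "\<And>n::nat. n \<in> {0, 1, q + 1} \<Longrightarrow> n \<le> q + 1" by auto
  ultimately show False using le[OF c3] by linarith
qed

lemma no_triangle:
  assumes L: "\<forall>i<3. L i \<in> \<L>" and poly: "is_polygon 3 L"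
  shows False
proof -
  have L0: "L 0 \<in> \<L>" and L1: "L 1 \<in> \<L>" and L2: "L 2 \<in> \<L>" using L by auto
  have l0: "is_line (L 0)" and l1: "is_line (L 1)" and l2: "is_line (L 2)" using L0 L1 L2 lines by auto
  have inj: "inj_on L {..<3}" and pts: "\<forall>i<3. is_point (L i \<inter> L (Suc i mod 3))"
    and injp: "inj_on (\<lambda>i. L i \<inter> L (Suc i mod 3)) {..<3}"
    using poly unfolding is_polygon_def by auto
  have ne01: "L 0 \<noteq> L 1" using inj_onD[OF inj, of 0 1] by auto
  have e: "Suc 0 mod 3 = 1" "Suc 1 mod 3 = 2" "Suc 2 mod 3 = 0" by simp_all
  have P0: "is_point (L 0 \<inter> L 1)" using pts[rule_format, of 0, unfolded e] by simp
  have P1: "is_point (L 1 \<inter> L 2)" using pts[rule_format, of 1, unfolded e] by simp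
  have P2: "is_point (L 2 \<inter> L 0)" using pts[rule_format, of 2, unfolded e] by simp
  have n01: "L 0 \<inter> L 1 \<noteq> L 1 \<inter> L 2"
  proof -
    have "(\<lambda>i. L i \<inter> L (Suc i mod 3)) 0 \<noteq> (\<lambda>i. L i \<inter> L (Suc i mod 3)) 1"
      by (rule inj_on_contraD[OF injp]) auto
    then show ?thesis by (simp only: e not_False_eq_True)
  qed
  have n02: "L 0 \<inter> L 1 \<noteq> L 2 \<inter> L 0"
  proof -
    have "(\<lambda>i. L i \<inter> L (Suc i mod 3)) 0 \<noteq> (\<lambda>i. L i \<inter> L (Suc i mod 3)) 2"
      by (rule inj_on_contraD[OF injp]) auto
    then show ?thesis by (simp only: e not_False_eq_True)
  qed
  have n12: "L 1 \<inter> L 2 \<noteq> L 2 \<inter> L 0"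
  proof -
    have "(\<lambda>i. L i \<inter> L (Suc i mod 3)) 1 \<noteq> (\<lambda>i. L i \<inter> L (Suc i mod 3)) 2"
      by (rule inj_on_contraD[OF injp]) auto
    then show ?thesis by (simp only: e not_False_eq_True)
  qed
  have s0: "vec.subspace (L 0)" and s1: "vec.subspace (L 1)" using psubD[OF l0] psubD[OF l1] by auto
  have sP: "vec.subspace (msum (L 0) (L 1))" using msum_sub[OF s0 s1] .
  have sub0: "L 0 \<subseteq> msum (L 0) (L 1)" "L 1 \<subseteq> msum (L 0) (L 1)"
    using msum_ge1[OF s1] msum_ge2[OF s0] by auto
  have "L 2 = msum (L 1 \<inter> L 2) (L 2 \<inter> L 0)" by (rule two_points_line[OF P1 P2 n12 l2 Int_lower2 Int_lower1])
  also have "\<dots> \<subseteq> msum (L 0) (L 1)" by (rule msum_le[OF sP]) (use sub0 in auto)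
  finally have L2P: "L 2 \<subseteq> msum (L 0) (L 1)" .
  have np: "\<not> (L 0 \<inter> L 1) \<subseteq> L 2"
  proof
    assume "L 0 \<inter> L 1 \<subseteq> L 2"
    then have "L 0 \<inter> L 1 \<subseteq> L 2 \<inter> L 0" by auto
    then show False using psub_eq[OF P0 P2] n02 by simp
  qed
  show False using lemmaC[OF L0 L1 ne01 P0 L2 L2P np] .
qed

lemma no_quadrangle:
  assumes L: "\<forall>i<4. L i \<in> \<L>" and poly: "is_polygon 4 L"
  shows False
proof -
  have L0: "L 0 \<in> \<L>" and L1: "L 1 \<in> \<L>" and L2: "L 2 \<in> \<L>" and L3: "L 3 \<in> \<L>" using L by auto
  have l0: "is_line (L 0)" and l1: "is_line (L 1)" and l2: "is_line (L 2)" and l3: "is_line (L 3)"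
    using L0 L1 L2 L3 lines by auto
  have inj: "inj_on L {..<4}" and pts: "\<forall>i<4. is_point (L i \<inter> L (Suc i mod 4))"
    and injp: "inj_on (\<lambda>i. L i \<inter> L (Suc i mod 4)) {..<4}"
    using poly unfolding is_polygon_def by auto
  have ne01: "L 0 \<noteq> L 1" using inj_onD[OF inj, of 0 1] by auto
  have ne12: "L 1 \<noteq> L 2" using inj_onD[OF inj, of 1 2] by auto
  have ne23: "L 2 \<noteq> L 3" using inj_onD[OF inj, of 2 3] by auto
  have e: "Suc 0 mod 4 = 1" "Suc 1 mod 4 = 2" "Suc 2 mod 4 = 3" "Suc 3 mod 4 = 0" by simp_all
  have P0: "is_point (L 0 \<inter> L 1)" using pts[rule_format, of 0, unfolded e] by simp
  have P1: "is_point (L 1 \<inter> L 2)" using pts[rule_format, of 1, unfolded e] by simp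
  have P2: "is_point (L 2 \<inter> L 3)" using pts[rule_format, of 2, unfolded e] by simp
  have P3: "is_point (L 3 \<inter> L 0)" using pts[rule_format, of 3, unfolded e] by simp
  have n01: "L 0 \<inter> L 1 \<noteq> L 1 \<inter> L 2"
  proof -
    have "(\<lambda>i. L i \<inter> L (Suc i mod 4)) 0 \<noteq> (\<lambda>i. L i \<inter> L (Suc i mod 4)) 1"
      by (rule inj_on_contraD[OF injp]) auto
    then show ?thesis by (simp only: e not_False_eq_True)
  qed
  have n02: "L 0 \<inter> L 1 \<noteq> L 2 \<inter> L 3"
  proof -
    have "(\<lambda>i. L i \<inter> L (Suc i mod 4)) 0 \<noteq> (\<lambda>i. L i \<inter> L (Suc i mod 4)) 2"
      by (rule inj_on_contraD[OF injp]) auto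
    then show ?thesis by (simp only: e not_False_eq_True)
  qed
  have n12: "L 1 \<inter> L 2 \<noteq> L 2 \<inter> L 3"
  proof -
    have "(\<lambda>i. L i \<inter> L (Suc i mod 4)) 1 \<noteq> (\<lambda>i. L i \<inter> L (Suc i mod 4)) 2"
      by (rule inj_on_contraD[OF injp]) auto
    then show ?thesis by (simp only: e not_False_eq_True)
  qed
  have n23: "L 2 \<inter> L 3 \<noteq> L 3 \<inter> L 0"
  proof -
    have "(\<lambda>i. L i \<inter> L (Suc i mod 4)) 2 \<noteq> (\<lambda>i. L i \<inter> L (Suc i mod 4)) 3"
      by (rule inj_on_contraD[OF injp]) auto
    then show ?thesis by (simp only: e not_False_eq_True)
  qed
  have s0: "vec.subspace (L 0)" and s1: "vec.subspace (L 1)" and s2: "vec.subspace (L 2)"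
    and s3: "vec.subspace (L 3)" using psubD[OF l0] psubD[OF l1] psubD[OF l2] psubD[OF l3] by auto
  have sub0: "L 0 \<subseteq> msum (L 0) (L 1)" "L 1 \<subseteq> msum (L 0) (L 1)"
    using msum_ge1[OF s1] msum_ge2[OF s0] by auto
  show False
  proof (cases "L 2 \<subseteq> msum (L 0) (L 1)")
    case True
    have np: "\<not> (L 0 \<inter> L 1) \<subseteq> L 2"
    proof
      assume "L 0 \<inter> L 1 \<subseteq> L 2"
      then have "L 0 \<inter> L 1 \<subseteq> L 1 \<inter> L 2" by auto
      then show False using psub_eq[OF P0 P1] n01 by simp
    qed
    show False using lemmaC[OF L0 L1 ne01 P0 L2 True np] .
  next
    case False
    have pl: "is_plane (msum (L 0) (L 1))" using meet_plane[OF l0 l1 P0] .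
    have p1P: "L 1 \<inter> L 2 \<subseteq> msum (L 0) (L 1)" using sub0 by auto
    define S where "S = msum (msum (L 0) (L 1)) (L 2)"
    have sol: "is_solid S" unfolding S_def using solid_ext[OF pl l2 False P1 p1P] by auto
    have sS: "vec.subspace S" using psubD[OF sol] .
    have P01S: "msum (L 0) (L 1) \<subseteq> S" and L2S: "L 2 \<subseteq> S"
      unfolding S_def using msum_ge1[OF s2] msum_ge2[OF msum_sub[OF s0 s1]] by auto
    have L0S: "L 0 \<subseteq> S" and L1S: "L 1 \<subseteq> S" using sub0 P01S by auto
    have "L 3 = msum (L 2 \<inter> L 3) (L 3 \<inter> L 0)" by (rule two_points_line[OF P2 P3 n23 l3 Int_lower2 Int_lower1])
    also have "\<dots> \<subseteq> S" by (rule msum_le[OF sS]) (use L0S L2S in auto)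
    finally have L3S: "L 3 \<subseteq> S" .
    have A: "{l\<in>\<L>. L 0 \<inter> L 1 \<subseteq> l} \<subseteq> {l\<in>\<L>. l \<subseteq> S}"
    proof
      fix l assume "l \<in> {l\<in>\<L>. L 0 \<inter> L 1 \<subseteq> l}"
      then have a: "l \<in> \<L>" "L 0 \<inter> L 1 \<subseteq> l" by auto
      have "l \<subseteq> msum (L 0) (L 1)" by (rule lemmaB[OF P0 L0 L1 ne01 Int_lower1 Int_lower2 a])
      also have "\<dots> \<subseteq> S" by (rule msum_le[OF sS L0S L1S])
      finally show "l \<in> {l\<in>\<L>. l \<subseteq> S}" using a by simp
    qed
    have B: "{l\<in>\<L>. L 1 \<inter> L 2 \<subseteq> l} \<subseteq> {l\<in>\<L>. l \<subseteq> S}"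
    proof
      fix l assume "l \<in> {l\<in>\<L>. L 1 \<inter> L 2 \<subseteq> l}"
      then have a: "l \<in> \<L>" "L 1 \<inter> L 2 \<subseteq> l" by auto
      have "l \<subseteq> msum (L 1) (L 2)" by (rule lemmaB[OF P1 L1 L2 ne12 Int_lower1 Int_lower2 a])
      also have "\<dots> \<subseteq> S" by (rule msum_le[OF sS L1S L2S])
      finally show "l \<in> {l\<in>\<L>. l \<subseteq> S}" using a by simp
    qed
    have C: "{l\<in>\<L>. L 2 \<inter> L 3 \<subseteq> l} \<subseteq> {l\<in>\<L>. l \<subseteq> S}"
    proof
      fix l assume "l \<in> {l\<in>\<L>. L 2 \<inter> L 3 \<subseteq> l}"
      then have a: "l \<in> \<L>" "L 2 \<inter> L 3 \<subseteq> l" by auto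
      have "l \<subseteq> msum (L 2) (L 3)" by (rule lemmaB[OF P2 L2 L3 ne23 Int_lower1 Int_lower2 a])
      also have "\<dots> \<subseteq> S" by (rule msum_le[OF sS L2S L3S])
      finally show "l \<in> {l\<in>\<L>. l \<subseteq> S}" using a by simp
    qed
    show False
      by (rule count3[OF finL A B C pen_card[OF P0 L0 Int_lower1] pen_card[OF P1 L1 Int_lower1]
        pen_card[OF P2 L2 Int_lower1]
        pen_inter[OF P0 P1 n01] pen_inter[OF P0 P2 n02] pen_inter[OF P1 P2 n12]
        solid_le[OF sol] q2])
  qed
qed

end

theorem mainTheorem17:
  fixes q :: nat and \<L> :: "('k::{field,finite} ^ 8) set set"
  assumes card_field: "CARD('k) = q ^ 3"
    and lines: "\<forall>l\<in>\<L>. is_line l"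
    and Pt: "\<forall>p. is_point p \<longrightarrow> card {l\<in>\<L>. p \<subseteq> l} \<in> {0, q + 1}"
    and Pl: "\<forall>\<pi>. is_plane \<pi> \<longrightarrow> card {l\<in>\<L>. l \<subseteq> \<pi>} \<in> {0, 1, q + 1}"
    and Sd: "\<forall>S. is_solid S \<longrightarrow> card {l\<in>\<L>. l \<subseteq> S} \<in> {0, 1, q + 1, 2 * q + 1}"
  shows "\<not> (\<exists>L. (\<forall>i<3. L i \<in> \<L>) \<and> is_polygon 3 L)
       \<and> \<not> (\<exists>L. (\<forall>i<4. L i \<in> \<L>) \<and> is_polygon 4 L)"
proof -
  interpret conf q \<L> using assms by unfold_locales
  show ?thesis using no_triangle no_quadrangle by blast
qed

end
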